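(* Let $\langle W,\varphi,(Y,\mathbb S,\sigma)\rangle$ be a monotone one-dimensional cocycle, $W\subseteq\mathbb R$ an open interval, with skew-product system $(X,\mathbb S_+,\pi)$, $h=\mathrm{pr}_2$, and $\tau\in\mathbb S_+$, $\tau>0$. Assume: (1) $u_1<u_2$ implies $\varphi(k\tau,u_1,y)<\varphi(k\tau,u_2,y)$ for all $k\in\mathbb N$, $y\in Y$; (2) $x_0\in X$ is positively Lagrange stable; (3) $y_0:=h(x_0)$ is asymptotically $\tau$-periodic, with $q:=\lim_{k\to\infty}\sigma(k\tau,y_0)$; (4) every $\tau$-periodic point $(u,q)$ of $(X,\mathbb S_+,\pi)$ is positively asymptotically stable. Then $x_0$ is asymptotically $\tau$-periodic.
   Context: Setting: $\mathbb S=\mathbb R$ or $\mathbb Z$; $(Y,\mathbb S,\sigma)$ two-sided dynamical system on a complete metric space; monotone cocycle $\varphi:\mathbb S_+\times W\times Y\to W$ (continuous, $\varphi(0,u,y)=u$, $\varphi(t+s,u,y)=\varphi(t,\varphi(s,u,y),\sigma(s,y))$, order preserving in $u$); skew-product $\pi(t,(u,y))=(\varphi(t,u,y),\sigma(t,y))$ on $X=W\times Y$. Positively Lagrange stable: $\{\pi(t,x_0):t\ge0\}$ precompact. $y_0$ asymptotically $\tau$-periodic: exists $q$ with $\sigma(\tau,q)=q$ and $\rho(\sigma(t,y_0),\sigma(t,q))\to0$. A $\tau$-periodic point $(u_0,q)$ (i.e. $\varphi(\tau,u_0,q)=u_0$) is positively asymptotically stable if (a) for every $\varepsilon>0$ there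 is $\delta>0$ with $|u-u_0|<\delta\Rightarrow|\varphi(t,u,q)-\varphi(t,u_0,q)|<\varepsilon$ for all $t\ge0$, and (b) there is $\gamma>0$ with $|\varphi(t,u,q)-\varphi(t,u_0,q)|\to0$ as $t\to\infty$ for all $|u-u_0|<\gamma$. $x_0$ is asymptotically $\tau$-periodic if there is $p$ with $\pi(\tau,p)=p$ and $\rho(\pi(t,x_0),\pi(t,p))\to0$. *)

theory Defs
  imports "HOL-Analysis.Analysis"
begin

definition time_set :: "real set \<Rightarrow> bool" where
  "time_set S \<longleftrightarrow> S = UNIV \<or> S = \<int>"

definition pos_part :: "real set \<Rightarrow> real set" where
  "pos_part S = {t \<in> S. 0 \<le> t}"

definition dyn_system :: "real set \<Rightarrow> (real \<Rightarrow> 'y::metric_space \<Rightarrow> 'y) \<Rightarrow> bool" where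
  "dyn_system S \<sigma> \<longleftrightarrow>
     continuous_on (S \<times> UNIV) (\<lambda>(t, y). \<sigma> t y) \<and>
     (\<forall>y. \<sigma> 0 y = y) \<and>
     (\<forall>t\<in>S. \<forall>s\<in>S. \<forall>y. \<sigma> (t + s) y = \<sigma> t (\<sigma> s y))"

definition monotone_cocycle ::
  "real set \<Rightarrow> real set \<Rightarrow> (real \<Rightarrow> real \<Rightarrow> 'y::metric_space \<Rightarrow> real) \<Rightarrow> (real \<Rightarrow> 'y \<Rightarrow> 'y) \<Rightarrow> bool" where
  "monotone_cocycle S W \<phi> \<sigma> \<longleftrightarrow>
     continuous_on (pos_part S \<times> W \<times> UNIV) (\<lambda>(t, u, y). \<phi> t u y) \<and>
     (\<forall>t\<in>pos_part S. \<forall>u\<in>W. \<forall>y. \<phi> t u y \<in> W) \<and>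
     (\<forall>u\<in>W. \<forall>y. \<phi> 0 u y = u) \<and>
     (\<forall>t\<in>pos_part S. \<forall>s\<in>pos_part S. \<forall>u\<in>W. \<forall>y.
        \<phi> (t + s) u y = \<phi> t (\<phi> s u y) (\<sigma> s y)) \<and>
     (\<forall>t\<in>pos_part S. \<forall>u1\<in>W. \<forall>u2\<in>W. \<forall>y. u1 \<le> u2 \<longrightarrow> \<phi> t u1 y \<le> \<phi> t u2 y)"

definition skew :: "(real \<Rightarrow> real \<Rightarrow> 'y \<Rightarrow> real) \<Rightarrow> (real \<Rightarrow> 'y \<Rightarrow> 'y) \<Rightarrow> real \<Rightarrow> real \<times> 'y \<Rightarrow> real \<times> 'y" where
  "skew \<phi> \<sigma> t x = (\<phi> t (fst x) (snd x), \<sigma> t (snd x))"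

definition pos_lagrange_stable ::
  "real set \<Rightarrow> ('x::metric_space) set \<Rightarrow> (real \<Rightarrow> 'x \<Rightarrow> 'x) \<Rightarrow> 'x \<Rightarrow> bool" where
  "pos_lagrange_stable S X \<pi> x0 \<longleftrightarrow>
     (\<exists>K. compact K \<and> K \<subseteq> X \<and> (\<lambda>t. \<pi> t x0) ` pos_part S \<subseteq> K)"

definition tends_zero_on :: "real set \<Rightarrow> (real \<Rightarrow> real) \<Rightarrow> bool" where
  "tends_zero_on S f \<longleftrightarrow> (\<forall>\<epsilon>>0. \<exists>T. \<forall>t\<in>S. t \<ge> T \<longrightarrow> \<bar>f t\<bar> < \<epsilon>)"

definition asymp_periodic ::
  "real set \<Rightarrow> ('z::metric_space) set \<Rightarrow> (real \<Rightarrow> 'z \<Rightarrow> 'z) \<Rightarrow> real \<Rightarrow> 'z \<Rightarrow> bool" where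
  "asymp_periodic S Z f \<tau> z0 \<longleftrightarrow>
     (\<exists>p\<in>Z. f \<tau> p = p \<and> tends_zero_on (pos_part S) (\<lambda>t. dist (f t z0) (f t p)))"

definition pos_asymp_stable ::
  "real set \<Rightarrow> real set \<Rightarrow> (real \<Rightarrow> real \<Rightarrow> 'y \<Rightarrow> real) \<Rightarrow> real \<Rightarrow> 'y \<Rightarrow> bool" where
  "pos_asymp_stable S W \<phi> u0 q \<longleftrightarrow>
     (\<forall>\<epsilon>>0. \<exists>\<delta>>0. \<forall>u\<in>W. \<bar>u - u0\<bar> < \<delta> \<longrightarrow>
        (\<forall>t\<in>pos_part S. \<bar>\<phi> t u q - \<phi> t u0 q\<bar> < \<epsilon>)) \<and>
     (\<exists>\<gamma>>0. \<forall>u\<in>W. \<bar>u - u0\<bar> < \<gamma> \<longrightarrow>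
        tends_zero_on (pos_part S) (\<lambda>t. \<phi> t u q - \<phi> t u0 q))"

end

theory Submission
  imports Defs
begin

lemma dist_pair_le: "dist (a,b) (c,d) \<le> dist a c + dist b d"
proof -
  have "dist (a,b) (c,d) \<le> dist (a,b) (c,b) + dist (c,b) (c,d)" by (rule dist_triangle)
  then show ?thesis by (simp add: dist_Pair_Pair)
qed

lemma compact_seq_lim:
  fixes f :: "nat \<Rightarrow> 'a::topological_space"
  assumes "f \<longlonglongrightarrow> l"
  shows "compact (insert l (range f))"
proof (rule compactI)
  fix C assume Co: "\<forall>t\<in>C. open t" and Cov: "insert l (range f) \<subseteq> \<Union>C"
  obtain U where U: "U \<in> C" "l \<in> U" using Cov by auto
  have "eventually (\<lambda>n. f n \<in> U) sequentially" using topological_tendstoD[OF assms] Co U by blast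
  then obtain N where N: "\<And>n. n \<ge> N \<Longrightarrow> f n \<in> U" unfolding eventually_sequentially by blast
  have "\<forall>n. \<exists>V\<in>C. f n \<in> V" using Cov by auto
  then obtain V where V: "\<And>n. V n \<in> C" "\<And>n. f n \<in> V n" by metis
  show "\<exists>C'\<subseteq>C. finite C' \<and> insert l (range f) \<subseteq> \<Union>C'"
  proof (intro exI conjI)
    show "insert U (V ` {..<N}) \<subseteq> C" using U V by auto
    show "finite (insert U (V ` {..<N}))" by simp
    show "insert l (range f) \<subseteq> \<Union>(insert U (V ` {..<N}))"
    proof
      fix x assume "x \<in> insert l (range f)"
      then consider "x = l" | n where "x = f n" by auto
      then show "x \<in> \<Union>(insert U (V ` {..<N}))"
      proof cases
        case 1 then show ?thesis using U by auto
      next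
        case (2 n) then show ?thesis using N V by (cases "n < N") auto
      qed
    qed
  qed
qed

lemma cont_pt:
  fixes \<phi> :: "real \<Rightarrow> real \<Rightarrow> 'y::metric_space \<Rightarrow> real"
  assumes "continuous_on (A \<times> W \<times> UNIV) (\<lambda>(t, u, y). \<phi> t u y)" "t \<in> A" "v \<in> W" "e > 0"
  shows "\<exists>d>0. \<forall>u\<in>W. \<forall>y. \<bar>u - v\<bar> < d \<longrightarrow> dist y q < d \<longrightarrow> \<bar>\<phi> t u y - \<phi> t v q\<bar> < e"
proof -
  have "(t, v, q) \<in> A \<times> W \<times> UNIV" using assms by auto
  with assms(1,4) obtain d where d: "d > 0" and
    H: "\<And>x'. x' \<in> A \<times> W \<times> UNIV \<Longrightarrow> dist x' (t,v,q) < d \<Longrightarrow>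
        dist ((\<lambda>(t, u, y). \<phi> t u y) x') ((\<lambda>(t, u, y). \<phi> t u y) (t,v,q)) < e"
    unfolding continuous_on_iff by metis
  show ?thesis
  proof (intro exI[of _ "d/2"] conjI ballI allI impI)
    show "d/2 > 0" using d by simp
    fix u y assume u: "u \<in> W" and "\<bar>u - v\<bar> < d/2" "dist y q < d/2"
    have "dist (t,u,y) (t,v,q) \<le> dist t t + dist (u,y) (v,q)" by (rule dist_pair_le)
    also have "\<dots> \<le> 0 + (dist u v + dist y q)" using dist_pair_le[of u y v q] by simp
    also have "\<dots> < d" using \<open>\<bar>u - v\<bar> < d/2\<close> \<open>dist y q < d/2\<close> by (simp add: dist_real_def)
    finally have "dist (t,u,y) (t,v,q) < d" .
    from H[OF _ this] u assms(2) show "\<bar>\<phi> t u y - \<phi> t v q\<bar> < e" by (simp add: dist_real_def)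
  qed
qed

theorem mainTheorem11:
  fixes S W :: "real set"
    and \<phi> :: "real \<Rightarrow> real \<Rightarrow> 'y::complete_space \<Rightarrow> real"
    and \<sigma> :: "real \<Rightarrow> 'y \<Rightarrow> 'y"
    and \<tau> u0 :: real and y0 q :: 'y
  assumes "time_set S"
    and "dyn_system S \<sigma>"
    and "open W" and "is_interval W" and "W \<noteq> {}"
    and "monotone_cocycle S W \<phi> \<sigma>"
    and "\<tau> \<in> pos_part S" and "\<tau> > 0"
    and strict: "\<And>(k::nat) u1 u2 y. u1 \<in> W \<Longrightarrow> u2 \<in> W \<Longrightarrow> u1 < u2 \<Longrightarrow>
                  \<phi> (real k * \<tau>) u1 y < \<phi> (real k * \<tau>) u2 y"
    and "u0 \<in> W"
    and "pos_lagrange_stable S (W \<times> UNIV) (skew \<phi> \<sigma>) (u0, y0)"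
    and "asymp_periodic S UNIV \<sigma> \<tau> y0"
    and "(\<lambda>k::nat. \<sigma> (real k * \<tau>) y0) \<longlonglongrightarrow> q"
    and "\<And>u. u \<in> W \<Longrightarrow> \<phi> \<tau> u q = u \<Longrightarrow> pos_asymp_stable S W \<phi> u q"
  shows "asymp_periodic S (W \<times> UNIV) (skew \<phi> \<sigma>) \<tau> (u0, y0)"
proof -
  define T where "T = pos_part S"
  have tauT: "\<tau> \<in> T" using assms(7) T_def by simp
  have tau: "\<tau> > 0" by fact
  have S_cases: "S = UNIV \<or> S = \<int>" using assms(1) by (simp add: time_set_def)
  have TS: "T \<subseteq> S" by (auto simp: T_def pos_part_def)
  have kT: "real k * \<tau> \<in> T" for k :: nat
    using S_cases tauT tau by (auto simp: T_def pos_part_def)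
  have addT: "t + s \<in> T" if "t \<in> T" "s \<in> T" for t s
    using S_cases that by (auto simp: T_def pos_part_def)
  have contphi: "continuous_on (T \<times> W \<times> UNIV) (\<lambda>(t, u, y). \<phi> t u y)"
    and mapsW: "\<And>t u y. t \<in> T \<Longrightarrow> u \<in> W \<Longrightarrow> \<phi> t u y \<in> W"
    and phi0: "\<And>u y. u \<in> W \<Longrightarrow> \<phi> 0 u y = u"
    and coc: "\<And>t s u y. t \<in> T \<Longrightarrow> s \<in> T \<Longrightarrow> u \<in> W \<Longrightarrow> \<phi> (t + s) u y = \<phi> t (\<phi> s u y) (\<sigma> s y)"
    and mono: "\<And>t u1 u2 y. t \<in> T \<Longrightarrow> u1 \<in> W \<Longrightarrow> u2 \<in> W \<Longrightarrow> u1 \<le> u2 \<Longrightarrow> \<phi> t u1 y \<le> \<phi> t u2 y"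
    using assms(6) unfolding monotone_cocycle_def T_def by blast+
  have sgrp: "\<And>t s y. t \<in> S \<Longrightarrow> s \<in> S \<Longrightarrow> \<sigma> (t + s) y = \<sigma> t (\<sigma> s y)"
    using assms(2) unfolding dyn_system_def by blast
  have large: "\<exists>N::nat. \<forall>n\<ge>N. T0 < real n * \<tau>" for T0
  proof -
    obtain N :: nat where N: "T0 / \<tau> < real N" using reals_Archimedean2 by blast
    have "T0 < real n * \<tau>" if "n \<ge> N" for n
    proof -
      have "T0 / \<tau> < real n" using N that by linarith
      then show ?thesis using tau by (simp add: pos_divide_less_eq)
    qed
    then show ?thesis by blast
  qed
  obtain p' where p'fix: "\<sigma> \<tau> p' = p'" and p'tz: "tends_zero_on T (\<lambda>t. dist (\<sigma> t y0) (\<sigma> t p'))"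
    using assms(12) unfolding asymp_periodic_def T_def by blast
  have sigk: "\<sigma> (real k * \<tau>) p = p" if "\<sigma> \<tau> p = p" for k p
  proof (induction k)
    case 0 then show ?case using assms(2) by (simp add: dyn_system_def)
  next
    case (Suc k)
    have "\<sigma> (real (Suc k) * \<tau>) p = \<sigma> (\<tau> + real k * \<tau>) p" by (simp add: algebra_simps)
    also have "\<dots> = \<sigma> \<tau> (\<sigma> (real k * \<tau>) p)" using sgrp tauT kT TS by blast
    finally show ?case using Suc that by simp
  qed
  have "(\<lambda>k::nat. \<sigma> (real k * \<tau>) y0) \<longlonglongrightarrow> p'"
    unfolding lim_sequentially
  proof (intro allI impI)
    fix r :: real assume "r > 0"
    then obtain T0 where T0: "\<And>t. t \<in> T \<Longrightarrow> t \<ge> T0 \<Longrightarrow> \<bar>dist (\<sigma> t y0) (\<sigma> t p')\<bar> < r"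
      using p'tz unfolding tends_zero_on_def by blast
    obtain N :: nat where N: "\<And>n. n \<ge> N \<Longrightarrow> T0 < real n * \<tau>" using large by blast
    show "\<exists>no. \<forall>n\<ge>no. dist (\<sigma> (real n * \<tau>) y0) p' < r"
    proof (intro exI allI impI)
      fix n assume "n \<ge> N"
      then have "\<bar>dist (\<sigma> (real n * \<tau>) y0) (\<sigma> (real n * \<tau>) p')\<bar> < r"
        using T0[OF kT] N by (meson less_le)
      then show "dist (\<sigma> (real n * \<tau>) y0) p' < r" using sigk[OF p'fix] by simp
    qed
  qed
  then have "p' = q" using assms(13) LIMSEQ_unique by blast
  then have qfix: "\<sigma> \<tau> q = q" and qtz: "tends_zero_on T (\<lambda>t. dist (\<sigma> t y0) (\<sigma> t q))"
    using p'fix p'tz by auto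
  define y where "y k = \<sigma> (real k * \<tau>) y0" for k :: nat
  define u where "u k = \<phi> (real k * \<tau>) u0 y0" for k :: nat
  define P where "P v = \<phi> \<tau> v q" for v
  define Q where "Q n v = \<phi> (real n * \<tau>) v q" for n :: nat and v
  have ylim: "y \<longlonglongrightarrow> q" using assms(13) unfolding y_def by simp
  have uW: "u k \<in> W" for k using mapsW[OF kT assms(10)] u_def by simp
  have uSuc: "u (Suc k) = \<phi> \<tau> (u k) (y k)" for k
  proof -
    have "u (Suc k) = \<phi> (\<tau> + real k * \<tau>) u0 y0" unfolding u_def by (simp add: algebra_simps)
    also have "\<dots> = \<phi> \<tau> (u k) (y k)" unfolding u_def y_def using coc[OF tauT kT assms(10)] .
    finally show ?thesis .
  qed
  have PW: "v \<in> W \<Longrightarrow> P v \<in> W" for v using mapsW tauT P_def by simp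
  have QW: "v \<in> W \<Longrightarrow> Q n v \<in> W" for n v using mapsW kT Q_def by simp
  have QSuc: "Q (Suc n) v = Q n (P v)" if "v \<in> W" for n v
  proof -
    have "Q (Suc n) v = \<phi> (real n * \<tau> + \<tau>) v q" unfolding Q_def by (simp add: algebra_simps)
    also have "\<dots> = Q n (P v)" unfolding Q_def P_def using coc[OF kT tauT that] qfix by simp
    finally show ?thesis .
  qed
  have QSuc': "Q (Suc n) v = P (Q n v)" if "v \<in> W" for n v
  proof -
    have "Q (Suc n) v = \<phi> (\<tau> + real n * \<tau>) v q" unfolding Q_def by (simp add: algebra_simps)
    also have "\<dots> = P (Q n v)" unfolding Q_def P_def using coc[OF tauT kT that] sigk[OF qfix] by simp
    finally show ?thesis .
  qed
  have Qfix: "Q n v = v" if "v \<in> W" "P v = v" for n v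
  proof (induction n)
    case 0 then show ?case by (simp add: Q_def phi0 that)
  next
    case (Suc n) then show ?case using QSuc[of v n] that by simp
  qed
  obtain K where K: "compact K" "K \<subseteq> W \<times> UNIV" "(\<lambda>t. skew \<phi> \<sigma> t (u0, y0)) ` pos_part S \<subseteq> K"
    using assms(11) unfolding pos_lagrange_stable_def by blast
  define K1 where "K1 = fst ` K"
  have K1c: "compact K1" unfolding K1_def by (intro compact_continuous_image K(1) continuous_intros)
  have K1W: "K1 \<subseteq> W" using K(2) K1_def by auto
  have phiK1: "\<phi> t u0 y0 \<in> K1" if "t \<in> T" for t
  proof -
    have "skew \<phi> \<sigma> t (u0, y0) \<in> K" using K(3) that unfolding T_def by blast
    then have "fst (skew \<phi> \<sigma> t (u0, y0)) \<in> K1" unfolding K1_def by blast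
    then show ?thesis by (simp add: skew_def)
  qed
  have uK1: "u k \<in> K1" for k using phiK1[OF kT] u_def by simp
  define Fr where "Fr v \<longleftrightarrow> (\<forall>e>0. \<forall>N. \<exists>k\<ge>N. \<bar>u k - v\<bar> < e)" for v
  have FrK1: "v \<in> K1" if Fv: "Fr v" for v
  proof -
    have "v \<in> closure K1" unfolding closure_approachable
    proof (intro allI impI)
      fix e :: real assume "e > 0"
      then obtain k where "\<bar>u k - v\<bar> < e" using Fv unfolding Fr_def by blast
      then have "dist (u k) v < e" by (simp add: dist_real_def)
      then show "\<exists>z\<in>K1. dist z v < e" using uK1 by blast
    qed
    moreover have "closure K1 = K1" using K1c compact_imp_closed closure_closed by blast
    ultimately show ?thesis by simp
  qed
  have FrP: "Fr (P v)" if Fv: "Fr v" for v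
    unfolding Fr_def
  proof (intro allI impI)
    fix e :: real and N :: nat assume "e > 0"
    have vW: "v \<in> W" using FrK1 Fv K1W by auto
    obtain d where d: "d > 0" and H: "\<forall>u'\<in>W. \<forall>y'. \<bar>u' - v\<bar> < d \<longrightarrow> dist y' q < d \<longrightarrow> \<bar>\<phi> \<tau> u' y' - \<phi> \<tau> v q\<bar> < e"
      using cont_pt[OF contphi tauT vW \<open>e > 0\<close>] by blast
    obtain N1 where N1: "\<forall>k\<ge>N1. dist (y k) q < d" using ylim d unfolding lim_sequentially by blast
    obtain k where k: "k \<ge> max N N1" "\<bar>u k - v\<bar> < d" using Fv d unfolding Fr_def by blast
    have "\<bar>u (Suc k) - P v\<bar> < e" using H uW[of k] k N1 unfolding uSuc P_def by simp
    moreover have "Suc k \<ge> N" using k by simp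
    ultimately show "\<exists>k\<ge>N. \<bar>u k - P v\<bar> < e" by blast
  qed
  obtain w where Frw: "Fr w"
  proof -
    obtain l r where l: "l \<in> K1" "strict_mono r" "(u \<circ> r) \<longlonglongrightarrow> l"
      using K1c uK1 unfolding compact_def by metis
    have "Fr l" unfolding Fr_def
    proof (intro allI impI)
      fix e :: real and N :: nat assume "e > 0"
      then obtain j0 where j0: "\<forall>j\<ge>j0. dist ((u \<circ> r) j) l < e" using l(3) unfolding lim_sequentially by blast
      have "r (max N j0) \<ge> N" using seq_suble[OF l(2), of "max N j0"] by simp
      moreover have "\<bar>u (r (max N j0)) - l\<bar> < e" using j0 by (simp add: dist_real_def)
      ultimately show "\<exists>k\<ge>N. \<bar>u k - l\<bar> < e" by blast
    qed
    then show ?thesis using that by blast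
  qed
  have wW: "w \<in> W" using FrK1[OF Frw] K1W by auto
  have FrQ: "Fr (Q n w)" for n
  proof (induction n)
    case 0 then show ?case using Frw by (simp add: Q_def phi0 wW)
  next
    case (Suc n) then show ?case using QSuc'[OF wW, of n] FrP by simp
  qed
  have QK1: "Q n w \<in> K1" for n using FrK1[OF FrQ] .
  have "monoseq (\<lambda>n. Q n w)" unfolding monoseq_Suc
  proof (cases "w \<le> P w")
    case True
    have "Q n w \<le> Q (Suc n) w" for n
      unfolding QSuc[OF wW] using mono[OF kT wW PW[OF wW] True] by (simp add: Q_def)
    then show "(\<forall>n. Q n w \<le> Q (Suc n) w) \<or> (\<forall>n. Q (Suc n) w \<le> Q n w)" by blast
  next
    case False
    have "Q (Suc n) w \<le> Q n w" for n
    proof -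
      have "P w \<le> w" using False by simp
      then show ?thesis unfolding QSuc[OF wW] using mono[OF kT PW[OF wW] wW] by (simp add: Q_def)
    qed
    then show "(\<forall>n. Q n w \<le> Q (Suc n) w) \<or> (\<forall>n. Q (Suc n) w \<le> Q n w)" by blast
  qed
  moreover have "Bseq (\<lambda>n. Q n w)" unfolding Bseq_eq_bounded
    by (rule bounded_subset[OF compact_imp_bounded[OF K1c]]) (use QK1 in auto)
  ultimately have "convergent (\<lambda>n. Q n w)" using Bseq_monoseq_convergent by blast
  then obtain m where Qlim: "(\<lambda>n. Q n w) \<longlonglongrightarrow> m" unfolding convergent_def by blast
  have mK1: "m \<in> K1" using closed_sequentially[OF compact_imp_closed[OF K1c] QK1 Qlim] .
  then have mW: "m \<in> W" using K1W by auto
  have "(\<lambda>n. P (Q n w)) \<longlonglongrightarrow> P m" unfolding lim_sequentially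
  proof (intro allI impI)
    fix r :: real assume "r > 0"
    obtain d where d: "d > 0" and H: "\<forall>u'\<in>W. \<forall>y'. \<bar>u' - m\<bar> < d \<longrightarrow> dist y' q < d \<longrightarrow> \<bar>\<phi> \<tau> u' y' - \<phi> \<tau> m q\<bar> < r"
      using cont_pt[OF contphi tauT mW \<open>r > 0\<close>] by blast
    obtain n0 where n0: "\<forall>n\<ge>n0. dist (Q n w) m < d" using Qlim d unfolding lim_sequentially by blast
    show "\<exists>no. \<forall>n\<ge>no. dist (P (Q n w)) (P m) < r"
    proof (intro exI allI impI)
      fix n assume "n \<ge> n0"
      then have "\<bar>Q n w - m\<bar> < d" using n0 by (simp add: dist_real_def)
      moreover have "Q n w \<in> W" using QK1 K1W by blast
      ultimately show "dist (P (Q n w)) (P m) < r" using H d by (simp add: P_def dist_real_def)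
    qed
  qed
  moreover have "(\<lambda>n. P (Q n w)) \<longlonglongrightarrow> m"
    using Qlim[THEN LIMSEQ_Suc] QSuc'[OF wW] by simp
  ultimately have mfix: "P m = m" using LIMSEQ_unique by blast
  have Frm: "Fr m" unfolding Fr_def
  proof (intro allI impI)
    fix e :: real and N :: nat assume "e > 0"
    then obtain n where n: "dist (Q n w) m < e/2" using Qlim unfolding lim_sequentially
      by (metis half_gt_zero order_refl)
    obtain k where k: "k \<ge> N" "\<bar>u k - Q n w\<bar> < e/2" using FrQ[of n] \<open>e > 0\<close> unfolding Fr_def
      by (meson half_gt_zero)
    have "\<bar>u k - m\<bar> < e" using abs_triangle_ineq[of "u k - Q n w" "Q n w - m"] n k by (simp add: dist_real_def)
    then show "\<exists>k\<ge>N. \<bar>u k - m\<bar> < e" using k by blast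
  qed
  obtain \<gamma> where \<gamma>: "\<gamma> > 0" and
    attr: "\<And>u'. u' \<in> W \<Longrightarrow> \<bar>u' - m\<bar> < \<gamma> \<Longrightarrow> tends_zero_on T (\<lambda>t. \<phi> t u' q - \<phi> t m q)"
    using assms(14)[OF mW] mfix unfolding pos_asymp_stable_def P_def T_def by blast
  have Qdec: "Q n u' \<le> u'" if "u' \<in> W" "P u' \<le> u'" for n u'
  proof (induction n)
    case 0 then show ?case by (simp add: Q_def phi0 that)
  next
    case (Suc n)
    have "Q (Suc n) u' \<le> Q n u'"
      using mono[OF kT PW[OF that(1)] that(1) that(2), of n q] QSuc[OF that(1), of n] by (simp add: Q_def)
    then show ?case using Suc by simp
  qed
  have Qinc: "Q n u' \<ge> u'" if "u' \<in> W" "P u' \<ge> u'" for n u'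
  proof (induction n)
    case 0 then show ?case by (simp add: Q_def phi0 that)
  next
    case (Suc n)
    have "Q (Suc n) u' \<ge> Q n u'"
      using mono[OF kT that(1) PW[OF that(1)] that(2), of n q] QSuc[OF that(1), of n] by (simp add: Q_def)
    then show ?case using Suc by simp
  qed
  have Qclose: "\<exists>n. \<bar>Q n u' - m\<bar> < e" if hyp: "u' \<in> W" "\<bar>u' - m\<bar> < \<gamma>" "e > 0" for u' e
  proof -
    obtain T0 where T0: "\<And>t. t \<in> T \<Longrightarrow> t \<ge> T0 \<Longrightarrow> \<bar>\<phi> t u' q - \<phi> t m q\<bar> < e"
      using attr[OF hyp(1,2)] hyp(3) unfolding tends_zero_on_def by blast
    obtain N :: nat where N: "T0 < real N * \<tau>" using large by blast
    have "\<bar>\<phi> (real N * \<tau>) u' q - \<phi> (real N * \<tau>) m q\<bar> < e" using T0[OF kT] N by simp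
    then show ?thesis using Qfix[OF mW mfix, of N] unfolding Q_def by metis
  qed
  have left: "P u' > u'" if hyp: "u' \<in> W" "m - \<gamma> < u'" "u' < m" for u'
  proof (rule ccontr)
    assume "\<not> P u' > u'"
    then have "P u' \<le> u'" by simp
    obtain n where "\<bar>Q n u' - m\<bar> < m - u'" using Qclose[of u' "m - u'"] hyp by auto
    moreover have "Q n u' \<le> u'" using Qdec[OF hyp(1) \<open>P u' \<le> u'\<close>] .
    ultimately show False by linarith
  qed
  have right: "P u' < u'" if hyp: "u' \<in> W" "m < u'" "u' < m + \<gamma>" for u'
  proof (rule ccontr)
    assume "\<not> P u' < u'"
    then have "P u' \<ge> u'" by simp
    obtain n where "\<bar>Q n u' - m\<bar> < u' - m" using Qclose[of u' "u' - m"] hyp by auto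
    moreover have "Q n u' \<ge> u'" using Qinc[OF hyp(1) \<open>P u' \<ge> u'\<close>] .
    ultimately show False by linarith
  qed
  obtain \<rho> where \<rho>: "\<rho> > 0" "ball m \<rho> \<subseteq> W" using assms(3) mW open_contains_ball by blast
  have ulim: "u \<longlonglongrightarrow> m"
    unfolding lim_sequentially
  proof (intro allI impI)
    fix e :: real assume "e > 0"
    define \<epsilon> where "\<epsilon> = min e (min \<gamma> \<rho> / 2)"
    have \<epsilon>: "\<epsilon> > 0" "\<epsilon> \<le> e" "\<epsilon> < \<gamma>" "\<epsilon> < \<rho>" using \<open>e > 0\<close> \<gamma> \<rho> by (auto simp: \<epsilon>_def)
    define a where "a = m - \<epsilon>"
    define b where "b = m + \<epsilon>"
    have aW: "a \<in> W" using \<rho> \<epsilon> by (auto simp: a_def dist_real_def)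
    have bW: "b \<in> W" using \<rho> \<epsilon> by (auto simp: b_def dist_real_def)
    have Pa: "P a > a" using left[OF aW] \<epsilon> by (simp add: a_def)
    have Pb: "P b < b" using right[OF bW] \<epsilon> by (simp add: b_def)
    obtain da where da: "da > 0" and Ha: "\<forall>u'\<in>W. \<forall>y'. \<bar>u' - a\<bar> < da \<longrightarrow> dist y' q < da \<longrightarrow> \<bar>\<phi> \<tau> u' y' - \<phi> \<tau> a q\<bar> < P a - a"
      using cont_pt[OF contphi tauT aW, of "P a - a" q] Pa by auto
    obtain db where db: "db > 0" and Hb: "\<forall>u'\<in>W. \<forall>y'. \<bar>u' - b\<bar> < db \<longrightarrow> dist y' q < db \<longrightarrow> \<bar>\<phi> \<tau> u' y' - \<phi> \<tau> b q\<bar> < b - P b"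
      using cont_pt[OF contphi tauT bW, of "b - P b" q] Pb by auto
    obtain Na where Na: "\<forall>k\<ge>Na. dist (y k) q < da" using ylim da unfolding lim_sequentially by blast
    obtain Nb where Nb: "\<forall>k\<ge>Nb. dist (y k) q < db" using ylim db unfolding lim_sequentially by blast
    have trap: "a < \<phi> \<tau> a (y k) \<and> \<phi> \<tau> b (y k) < b" if "k \<ge> max Na Nb" for k
    proof -
      have "\<bar>\<phi> \<tau> a (y k) - P a\<bar> < P a - a" using Ha aW da Na that unfolding P_def by auto
      moreover have "\<bar>\<phi> \<tau> b (y k) - P b\<bar> < b - P b" using Hb bW db Nb that unfolding P_def by auto
      ultimately show ?thesis by linarith
    qed
    obtain k0 where k0: "k0 \<ge> max Na Nb" "\<bar>u k0 - m\<bar> < \<epsilon>" using Frm \<epsilon>(1) unfolding Fr_def by blast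
    have inv: "\<bar>u (k0 + j) - m\<bar> < \<epsilon>" for j
    proof (induction j)
      case 0 then show ?case using k0 by simp
    next
      case (Suc j)
      let ?k = "k0 + j"
      have ab: "a \<le> u ?k" "u ?k \<le> b" using Suc by (auto simp: a_def b_def)
      have t: "a < \<phi> \<tau> a (y ?k) \<and> \<phi> \<tau> b (y ?k) < b" using trap k0 by simp
      have "\<phi> \<tau> a (y ?k) \<le> \<phi> \<tau> (u ?k) (y ?k)" using mono[OF tauT aW uW ab(1)] .
      moreover have "\<phi> \<tau> (u ?k) (y ?k) \<le> \<phi> \<tau> b (y ?k)" using mono[OF tauT uW bW ab(2)] .
      ultimately have "a < u (Suc ?k) \<and> u (Suc ?k) < b" using t uSuc[of ?k] by auto
      then show ?case by (auto simp: a_def b_def)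
    qed
    show "\<exists>no. \<forall>n\<ge>no. dist (u n) m < e"
    proof (intro exI allI impI)
      fix n assume "n \<ge> k0"
      then have "\<bar>u n - m\<bar> < \<epsilon>" using inv[of "n - k0"] by simp
      then show "dist (u n) m < e" using \<epsilon> by (simp add: dist_real_def)
    qed
  qed
  define I where "I = {0..\<tau>} \<inter> S"
  have Iclosed: "closed S" using S_cases closed_Ints by auto
  have Ic: "compact I" unfolding I_def using compact_Int_closed[OF compact_Icc Iclosed] .
  have IT: "I \<subseteq> T" by (auto simp: I_def T_def pos_part_def)
  define Yc where "Yc = insert q (range y)"
  have Ycc: "compact Yc" unfolding Yc_def using compact_seq_lim[OF ylim] .
  define C where "C = I \<times> K1 \<times> Yc"
  have Cc: "compact C" unfolding C_def using Ic K1c Ycc by (intro compact_Times)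
  have CT: "C \<subseteq> T \<times> W \<times> UNIV" unfolding C_def using IT K1W by auto
  have uc: "uniformly_continuous_on C (\<lambda>(t, u, y). \<phi> t u y)"
    using compact_uniformly_continuous[OF continuous_on_subset[OF contphi CT] Cc] .
  have main: "tends_zero_on T (\<lambda>t. dist (skew \<phi> \<sigma> t (u0, y0)) (skew \<phi> \<sigma> t (m, q)))"
    unfolding tends_zero_on_def
  proof (intro allI impI)
    fix e :: real assume "e > 0"
    then have e2: "e/2 > 0" by simp
    obtain d where d: "d > 0" and H: "\<forall>x\<in>C. \<forall>x'\<in>C. dist x' x < d \<longrightarrow>
        dist ((\<lambda>(t, u, y). \<phi> t u y) x') ((\<lambda>(t, u, y). \<phi> t u y) x) < e/2"
      using uc e2 unfolding uniformly_continuous_on_def by metis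
    have d2: "d/2 > 0" using d by simp
    obtain N1 where N1: "\<forall>k\<ge>N1. dist (u k) m < d/2" using ulim d2 unfolding lim_sequentially by blast
    obtain N2 where N2: "\<forall>k\<ge>N2. dist (y k) q < d/2" using ylim d2 unfolding lim_sequentially by blast
    obtain T1 where T1: "\<And>t. t \<in> T \<Longrightarrow> t \<ge> T1 \<Longrightarrow> \<bar>dist (\<sigma> t y0) (\<sigma> t q)\<bar> < e/2"
      using qtz e2 unfolding tends_zero_on_def by blast
    show "\<exists>T0. \<forall>t\<in>T. T0 \<le> t \<longrightarrow> \<bar>dist (skew \<phi> \<sigma> t (u0, y0)) (skew \<phi> \<sigma> t (m, q))\<bar> < e"
    proof (intro exI ballI impI)
      fix t assume tT: "t \<in> T" and tge: "max T1 (real (max N1 N2) * \<tau>) \<le> t"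
      define k where "k = nat \<lfloor>t / \<tau>\<rfloor>"
      have t0: "t \<ge> 0" using tT by (simp add: T_def pos_part_def)
      have kreal: "real k = of_int \<lfloor>t / \<tau>\<rfloor>" unfolding k_def using t0 tau by simp
      have kle: "real k \<le> t / \<tau>" using kreal by linarith
      have klt: "t / \<tau> < real k + 1" using kreal by linarith
      define s where "s = t - real k * \<tau>"
      have s0: "0 \<le> s" using kle tau by (simp add: s_def pos_le_divide_eq)
      have sle: "s \<le> \<tau>" using klt tau by (simp add: s_def pos_divide_less_eq algebra_simps)
      have sS: "s \<in> S"
      proof -
        have "t \<in> S" using tT TS by blast
        moreover have "real k * \<tau> \<in> S" using kT TS by blast
        ultimately show ?thesis using S_cases unfolding s_def by (auto intro: Ints_diff)
      qed
      have sI: "s \<in> I" using s0 sle sS by (simp add: I_def)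
      have sT: "s \<in> T" using sI IT by blast
      have "real (max N1 N2) \<le> t / \<tau>" using tge tau by (simp add: pos_le_divide_eq)
      then have "of_int (int (max N1 N2)) \<le> t / \<tau>" by simp
      then have "int (max N1 N2) \<le> \<lfloor>t / \<tau>\<rfloor>" by (simp only: le_floor_iff)
      then have "max N1 N2 \<le> k" unfolding k_def by linarith
      then have kN: "k \<ge> N1" "k \<ge> N2" by auto
      have tsplit: "t = s + real k * \<tau>" by (simp add: s_def)
      have e1: "\<phi> t u0 y0 = \<phi> s (u k) (y k)"
        unfolding tsplit u_def y_def using coc[OF sT kT assms(10)] .
      have e2': "\<phi> t m q = \<phi> s m q"
        unfolding tsplit using coc[OF sT kT mW] Qfix[OF mW mfix, of k] sigk[OF qfix, of k] by (simp add: Q_def)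
      have x1: "(s, m, q) \<in> C" using sI mK1 by (simp add: C_def Yc_def)
      have x2: "(s, u k, y k) \<in> C" using sI uK1 by (simp add: C_def Yc_def)
      have "dist (s, u k, y k) (s, m, q) \<le> dist s s + dist (u k, y k) (m, q)" by (rule dist_pair_le)
      also have "\<dots> \<le> 0 + (dist (u k) m + dist (y k) q)" using dist_pair_le[of "u k" "y k" m q] by simp
      also have "\<dots> < d" using N1 N2 kN by force
      finally have "dist (s, u k, y k) (s, m, q) < d" .
      then have "dist (\<phi> s (u k) (y k)) (\<phi> s m q) < e/2" using H x1 x2 by fastforce
      then have A: "dist (\<phi> t u0 y0) (\<phi> t m q) < e/2" using e1 e2' by simp
      have B: "dist (\<sigma> t y0) (\<sigma> t q) < e/2" using T1[OF tT] tge by simp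
      have "dist (skew \<phi> \<sigma> t (u0, y0)) (skew \<phi> \<sigma> t (m, q)) \<le> dist (\<phi> t u0 y0) (\<phi> t m q) + dist (\<sigma> t y0) (\<sigma> t q)"
        unfolding skew_def using dist_pair_le by simp
      then show "\<bar>dist (skew \<phi> \<sigma> t (u0, y0)) (skew \<phi> \<sigma> t (m, q))\<bar> < e" using A B by simp
    qed
  qed
  have "skew \<phi> \<sigma> \<tau> (m, q) = (m, q)" using mfix qfix by (simp add: skew_def P_def)
  then show ?thesis unfolding asymp_periodic_def using main mW T_def by auto
qed

end
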